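(* Let $\mathcal{X}$ be a compact subset of a Euclidean space, $k$ a continuous positive definite kernel on $\mathcal{X}$ with RKHS $\mathcal{H}_k$ and closed unit ball $\mathcal{H}_k^1$, $\rho$ a Borel probability measure on $\mathcal{X}$, and $(\lambda_l)_{l\ge1}$ the eigenvalues of $(K_\rho g)(x)=\int_{\mathcal{X}}k(x,x')g(x')\,d\rho(x')$ on $L^2(\rho)$ in nonincreasing order with multiplicity (padded with zeros if finitely many are nonzero). Then for any $n\ge1$ and $x_1,\dots,x_n\in\mathcal{X}$, $$\mathbb{E}_{x\sim\rho}\Big[\sup_{f\in\mathcal{H}_k^1,\ f(x_1)=\dots=f(x_n)=0}|f(x)|^2\Big]\ge\sum_{l=n+1}^\infty\lambda_l.$$
   Context: A continuous positive definite kernel $k$ on $\mathcal{X}$ is a continuous symmetric function with $\sum_{i,j}a_ia_jk(x_i,x_j)\ge0$ for all finite families; $\mathcal{H}_k$ is the associated reproducing kernel Hilbert space, with reproducing property $f(x)=\langle f,k(x,\cdot)\rangle_{\mathcal{H}_k}$. *)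

theory Defs
  imports "HOL-Probability.Probability"
begin

definition pd_kernel :: "'a::topological_space set \<Rightarrow> ('a \<Rightarrow> 'a \<Rightarrow> real) \<Rightarrow> bool" where
  "pd_kernel X k \<longleftrightarrow>
     continuous_on (X \<times> X) (\<lambda>(x, y). k x y) \<and>
     (\<forall>x\<in>X. \<forall>y\<in>X. k x y = k y x) \<and>
     (\<forall>m (a :: nat \<Rightarrow> real) (z :: nat \<Rightarrow> 'a). (\<forall>i<m. z i \<in> X) \<longrightarrow>
        0 \<le> (\<Sum>i<m. \<Sum>j<m. a i * a j * k (z i) (z j)))"

text \<open>Elements of the pre-RKHS span{k(y,.)}: finite representations
  (coefficients c, centres y, length m), i.e. sum_{i<m} c_i k(y_i, .).\<close>
type_synonym 'a krep = "(nat \<Rightarrow> real) \<times> (nat \<Rightarrow> 'a) \<times> nat"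

definition krep_in :: "'a set \<Rightarrow> 'a krep \<Rightarrow> bool" where
  "krep_in X r \<longleftrightarrow> (case r of (c, y, m) \<Rightarrow> \<forall>i<m. y i \<in> X)"

definition krep_eval :: "('a \<Rightarrow> 'a \<Rightarrow> real) \<Rightarrow> 'a krep \<Rightarrow> 'a \<Rightarrow> real" where
  "krep_eval k r x = (case r of (c, y, m) \<Rightarrow> \<Sum>i<m. c i * k (y i) x)"

definition krep_ip :: "('a \<Rightarrow> 'a \<Rightarrow> real) \<Rightarrow> 'a krep \<Rightarrow> 'a krep \<Rightarrow> real" where
  "krep_ip k r s = (case r of (c, y, m) \<Rightarrow> case s of (d, z, p) \<Rightarrow>
      \<Sum>i<m. \<Sum>j<p. c i * d j * k (y i) (z j))"

definition krep_dist2 :: "('a \<Rightarrow> 'a \<Rightarrow> real) \<Rightarrow> 'a krep \<Rightarrow> 'a krep \<Rightarrow> real" where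
  "krep_dist2 k r s = krep_ip k r r - 2 * krep_ip k r s + krep_ip k s s"

text \<open>Closed unit ball of the RKHS H_k on X (Moore--Aronszajn construction):
  f is a pointwise (on X) limit of a Cauchy sequence in span{k(y,.) : y in X},
  and its RKHS norm (the limit of the norms) is at most 1.\<close>
definition rkhs_ball :: "'a set \<Rightarrow> ('a \<Rightarrow> 'a \<Rightarrow> real) \<Rightarrow> ('a \<Rightarrow> real) set" where
  "rkhs_ball X k = {f. \<exists>F :: nat \<Rightarrow> 'a krep.
      (\<forall>n. krep_in X (F n)) \<and>
      (\<forall>e>0. \<exists>N. \<forall>p\<ge>N. \<forall>q\<ge>N. krep_dist2 k (F p) (F q) < e) \<and>
      (\<forall>x\<in>X. (\<lambda>n. krep_eval k (F n) x) \<longlonglongrightarrow> f x) \<and>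
      (\<exists>L\<le>1. (\<lambda>n. krep_ip k (F n) (F n)) \<longlonglongrightarrow> L)}"

definition eigen_onfamily :: "('a \<Rightarrow> 'a \<Rightarrow> real) \<Rightarrow> 'a measure \<Rightarrow> real \<Rightarrow> nat \<Rightarrow> (nat \<Rightarrow> 'a \<Rightarrow> real) \<Rightarrow> bool" where
  "eigen_onfamily k rho mu m g \<longleftrightarrow>
     (\<forall>i<m. g i \<in> borel_measurable rho \<and> integrable rho (\<lambda>x. (g i x)\<^sup>2) \<and>
        (AE x in rho. (\<integral>y. k x y * g i y \<partial>rho) = mu * g i x)) \<and>
     (\<forall>i<m. \<forall>j<m. (\<integral>x. g i x * g j x \<partial>rho) = (if i = j then 1 else 0))"

text \<open>mu is an eigenvalue of K_rho on L^2(rho) of multiplicity exactly m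
  (dimension of the eigenspace; m = 0 means mu is not an eigenvalue).\<close>
definition eigen_mult :: "('a \<Rightarrow> 'a \<Rightarrow> real) \<Rightarrow> 'a measure \<Rightarrow> real \<Rightarrow> nat \<Rightarrow> bool" where
  "eigen_mult k rho mu m \<longleftrightarrow>
     (\<exists>g. eigen_onfamily k rho mu m g) \<and> \<not> (\<exists>g. eigen_onfamily k rho mu (Suc m) g)"

text \<open>lam 0, lam 1, ... are the eigenvalues lambda_1, lambda_2, ... of K_rho in
  nonincreasing order, repeated with multiplicity, padded with zeros.
  (K_rho is a positive operator, so all nonzero eigenvalues are positive.)\<close>
definition kernel_eigenvalues :: "('a \<Rightarrow> 'a \<Rightarrow> real) \<Rightarrow> 'a measure \<Rightarrow> (nat \<Rightarrow> real) \<Rightarrow> bool" where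
  "kernel_eigenvalues k rho lam \<longleftrightarrow>
     antimono lam \<and> (\<forall>l. 0 \<le> lam l) \<and>
     (\<forall>mu>0. finite {l. lam l = mu} \<and> eigen_mult k rho mu (card {l. lam l = mu}))"

end

theory Submission
  imports Defs
begin

locale kset =
  fixes X :: "'a::euclidean_space set" and k :: "'a \<Rightarrow> 'a \<Rightarrow> real" and rho :: "'a measure"
  assumes cpt: "compact X" and pd: "pd_kernel X k" and ps: "prob_space rho"
    and sets_rho: "sets rho = sets (restrict_space borel X)"
begin

lemma space_rho: "space rho = X"
  using sets_eq_imp_space_eq[OF sets_rho] by (simp add: space_restrict_space)

lemma meas_cont: "continuous_on X g \<Longrightarrow> (g::'a\<Rightarrow>real) \<in> borel_measurable rho"
  using measurable_cong_sets[OF sets_rho refl] borel_measurable_continuous_on_restrict by blast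

lemma kcont: "continuous_on (X \<times> X) (\<lambda>(x, y). k x y)"
  using pd by (simp add: pd_kernel_def)

lemma ksym: "x \<in> X \<Longrightarrow> y \<in> X \<Longrightarrow> k x y = k y x"
  using pd by (simp add: pd_kernel_def)

lemma kx_cont: assumes "x \<in> X" shows "continuous_on X (k x)" "continuous_on X (\<lambda>y. k y x)"
proof -
  have "continuous_on X ((\<lambda>(x, y). k x y) \<circ> (\<lambda>y. (x,y)))"
    by (rule continuous_on_compose) (use assms in \<open>auto intro!: continuous_intros continuous_on_subset[OF kcont]\<close>)
  then show "continuous_on X (k x)" by (simp add: o_def)
  have "continuous_on X ((\<lambda>(x, y). k x y) \<circ> (\<lambda>y. (y,x)))"
    by (rule continuous_on_compose) (use assms in \<open>auto intro!: continuous_intros continuous_on_subset[OF kcont]\<close>)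
  then show "continuous_on X (\<lambda>y. k y x)" by (simp add: o_def)
qed

lemma kbound: obtains C where "C \<ge> 0" "\<And>x y. x \<in> X \<Longrightarrow> y \<in> X \<Longrightarrow> \<bar>k x y\<bar> \<le> C"
proof -
  have "compact ((\<lambda>(x, y). k x y) ` (X \<times> X))"
    by (rule compact_continuous_image[OF kcont]) (simp add: cpt compact_Times)
  then obtain C where C: "\<forall>v\<in>(\<lambda>(x, y). k x y) ` (X \<times> X). norm v \<le> C"
    using compact_imp_bounded bounded_iff by blast
  show ?thesis
  proof (rule that[of "max C 0"])
    fix x y assume "x \<in> X" "y \<in> X"
    then show "\<bar>k x y\<bar> \<le> max C 0" using C by force
  qed simp
qed

lemma kunif: assumes "e > 0"
  obtains d where "d > 0" "\<And>a a' b b'. a \<in> X \<Longrightarrow> a' \<in> X \<Longrightarrow> b \<in> X \<Longrightarrow> b' \<in> X \<Longrightarrow>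
     dist a a' < d \<Longrightarrow> dist b b' < d \<Longrightarrow> \<bar>k a b - k a' b'\<bar> < e"
proof -
  have "uniformly_continuous_on (X \<times> X) (\<lambda>(x, y). k x y)"
    by (rule compact_uniformly_continuous[OF kcont]) (simp add: cpt compact_Times)
  then obtain d where d: "d > 0" "\<And>p p'. p \<in> X \<times> X \<Longrightarrow> p' \<in> X \<times> X \<Longrightarrow> dist p' p < d \<Longrightarrow>
      dist ((\<lambda>(x, y). k x y) p') ((\<lambda>(x, y). k x y) p) < e"
    using assms unfolding uniformly_continuous_on_def by metis
  show ?thesis
  proof (rule that[of "d/2"])
    fix a a' b b' assume X: "a \<in> X" "a' \<in> X" "b \<in> X" "b' \<in> X" and dd: "dist a a' < d/2" "dist b b' < d/2"
    have "dist (a', b') (a, b) \<le> dist a' a + dist b' b" by (simp add: dist_Pair_Pair sqrt_sum_squares_le_sum)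
    also have "\<dots> < d" using dd by (simp add: dist_commute)
    finally have "dist ((\<lambda>(x, y). k x y) (a,b)) ((\<lambda>(x, y). k x y) (a',b')) < e"
      using d(2)[of "(a,b)" "(a',b')"] X by (auto simp: dist_commute)
    then show "\<bar>k a b - k a' b'\<bar> < e" by (simp add: dist_real_def)
  qed (use d in auto)
qed

lemma int_bdd:
  fixes h g :: "'a \<Rightarrow> real"
  assumes h: "integrable rho h" and g: "g \<in> borel_measurable rho" and B: "\<And>y. y \<in> X \<Longrightarrow> \<bar>g y\<bar> \<le> B"
  shows "integrable rho (\<lambda>y. h y * g y)" "\<bar>\<integral>y. h y * g y \<partial>rho\<bar> \<le> B * (\<integral>y. \<bar>h y\<bar> \<partial>rho)"
proof -
  have hm: "h \<in> borel_measurable rho" using h by auto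
  obtain y0 where "y0 \<in> X" using space_rho prob_space.not_empty[OF ps] by auto
  then have "\<bar>g y0\<bar> \<le> B" by (rule B)
  then have B0: "B \<ge> 0" by (meson abs_ge_zero order_trans)
  have bnd: "\<And>y. y \<in> space rho \<Longrightarrow> \<bar>h y * g y\<bar> \<le> B * \<bar>h y\<bar>"
    using B B0 by (auto simp: space_rho abs_mult mult_left_mono mult.commute intro: mult_right_mono)
  show i: "integrable rho (\<lambda>y. h y * g y)"
  proof (rule Bochner_Integration.integrable_bound[where f="\<lambda>y. B * \<bar>h y\<bar>"])
    show "integrable rho (\<lambda>y. B * \<bar>h y\<bar>)" using h by auto
    show "(\<lambda>y. h y * g y) \<in> borel_measurable rho" using hm g by measurable
    show "AE y in rho. norm (h y * g y) \<le> norm (B * \<bar>h y\<bar>)" using bnd B0 by (auto intro!: AE_I2 simp: abs_mult)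
  qed
  have "\<bar>\<integral>y. h y * g y \<partial>rho\<bar> \<le> (\<integral>y. B * \<bar>h y\<bar> \<partial>rho)"
    using Bochner_Integration.integral_norm_bound_integral[OF i, of "\<lambda>y. B * \<bar>h y\<bar>"] h bnd by auto
  then show "\<bar>\<integral>y. h y * g y \<partial>rho\<bar> \<le> B * (\<integral>y. \<bar>h y\<bar> \<partial>rho)" by simp
qed


lemma quantizer: assumes "d > 0"
  obtains m :: nat and z f where "\<And>i. i < m \<Longrightarrow> z i \<in> X" "f \<in> measurable rho (count_space UNIV)"
    "\<And>y. y \<in> X \<Longrightarrow> f y < m \<and> dist y (z (f y)) < d"
proof -
  have "X \<subseteq> (\<Union>c\<in>X. ball c d)" using assms by auto
  then obtain T where T: "T \<subseteq> X" "finite T" "X \<subseteq> (\<Union>c\<in>T. ball c d)"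
    using compactE_image[OF cpt, of X "\<lambda>c. ball c d"] by auto
  then obtain z and m::nat where zm: "T = z ` {i. i < m}"
    using finite_imp_nat_seg_image_inj_on by metis
  define f where "f y = (LEAST i. i < m \<and> dist y (z i) < d)" for y
  show ?thesis
  proof (rule that[of m z f])
    show "\<And>i. i < m \<Longrightarrow> z i \<in> X" using zm T by auto
    have [measurable]: "(\<lambda>y. dist y (z i)) \<in> borel_measurable rho" for i
      by (rule meas_cont) (intro continuous_intros)
    show "f \<in> measurable rho (count_space UNIV)"
      unfolding f_def by measurable
    fix y assume "y \<in> X"
    then obtain i where "i < m" "dist y (z i) < d" using T zm by (force simp: dist_commute)
    then show "f y < m \<and> dist y (z (f y)) < d" unfolding f_def
      by (metis (mono_tags, lifting) LeastI)
  qed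
qed

lemma kint: assumes "x \<in> X" "integrable rho h"
  shows "integrable rho (\<lambda>y. k x y * h y)" "integrable rho (\<lambda>y. h y * k x y)"
proof -
  obtain C where C: "C \<ge> 0" "\<And>x y. x \<in> X \<Longrightarrow> y \<in> X \<Longrightarrow> \<bar>k x y\<bar> \<le> C" using kbound by blast
  show "integrable rho (\<lambda>y. h y * k x y)"
    using int_bdd(1)[OF assms(2) meas_cont[OF kx_cont(1)[OF assms(1)]], of C] C assms by auto
  then show "integrable rho (\<lambda>y. k x y * h y)" by (simp add: mult.commute)
qed

lemma Tcont: assumes h: "integrable rho h"
  shows "continuous_on X (\<lambda>x. \<integral>y. k x y * h y \<partial>rho)"
  unfolding continuous_on_iff
proof (intro ballI allI impI)
  fix x :: 'a and e :: real assume x: "x \<in> X" and e: "e > 0"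
  define A where "A = (\<integral>y. \<bar>h y\<bar> \<partial>rho)"
  have A0: "A \<ge> 0" unfolding A_def by simp
  have e': "e / (A + 1) > 0" using e A0 by simp
  obtain d where d: "d > 0" "\<And>a a' b b'. a \<in> X \<Longrightarrow> a' \<in> X \<Longrightarrow> b \<in> X \<Longrightarrow> b' \<in> X \<Longrightarrow>
     dist a a' < d \<Longrightarrow> dist b b' < d \<Longrightarrow> \<bar>k a b - k a' b'\<bar> < e / (A + 1)"
    using kunif[OF e'] by metis
  show "\<exists>d>0. \<forall>x'\<in>X. dist x' x < d \<longrightarrow> dist (\<integral>y. k x' y * h y \<partial>rho) (\<integral>y. k x y * h y \<partial>rho) < e"
  proof (intro exI[of _ d] conjI ballI impI)
    fix x' assume x': "x' \<in> X" "dist x' x < d"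
    have "(\<integral>y. k x' y * h y \<partial>rho) - (\<integral>y. k x y * h y \<partial>rho) = (\<integral>y. h y * (k x' y - k x y) \<partial>rho)"
      by (subst Bochner_Integration.integral_diff[symmetric]) (auto intro!: kint x x' h Bochner_Integration.integral_cong simp: algebra_simps)
    also have "\<bar>\<dots>\<bar> \<le> e / (A + 1) * A"
    proof -
      have "\<bar>\<integral>y. h y * (k x' y - k x y) \<partial>rho\<bar> \<le> e / (A + 1) * (\<integral>y. \<bar>h y\<bar> \<partial>rho)"
      proof (rule int_bdd(2)[OF h, of "\<lambda>y. k x' y - k x y" "e / (A + 1)"])
        show "(\<lambda>y. k x' y - k x y) \<in> borel_measurable rho"
          using meas_cont[OF kx_cont(1)[OF x]] meas_cont[OF kx_cont(1)[OF x'(1)]] by measurable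
        fix y assume "y \<in> X"
        then show "\<bar>k x' y - k x y\<bar> \<le> e / (A + 1)" using d(2)[of x' x y y] x x' d(1) by fastforce
      qed
      then show ?thesis by (simp add: A_def)
    qed
    also have "\<dots> < e" using e A0 by (simp add: field_simps)
    finally show "dist (\<integral>y. k x' y * h y \<partial>rho) (\<integral>y. k x y * h y \<partial>rho) < e" by (simp add: dist_real_def)
  qed (use d in auto)
qed

end

context kset begin

lemma meas_nat: "f \<in> measurable rho (count_space UNIV) \<Longrightarrow> (\<lambda>y. G (f y) :: real) \<in> borel_measurable rho"
  by (rule measurable_compose[of f rho "count_space UNIV" G]) auto

lemma int_if: assumes h: "integrable rho h" and f: "f \<in> measurable rho (count_space UNIV)"
  shows "integrable rho (\<lambda>y. if f y = (i::nat) then h y else (0::real))"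
proof (rule Bochner_Integration.integrable_bound[where f=h])
  have [measurable]: "f \<in> measurable rho (count_space UNIV)" by (fact f)
  have [measurable]: "h \<in> borel_measurable rho" using h by auto
  show "(\<lambda>y. if f y = i then h y else 0) \<in> borel_measurable rho" by measurable
qed (use h in auto)

lemma sumint:
  fixes G :: "nat \<Rightarrow> real"
  assumes h: "integrable rho h" and f: "f \<in> measurable rho (count_space UNIV)"
    and fm: "\<And>y. y \<in> X \<Longrightarrow> f y < m"
  shows "(\<Sum>i<m. (\<integral>y. (if f y = i then h y else 0) \<partial>rho) * G i) = (\<integral>y. h y * G (f y) \<partial>rho)"
proof -
  have "(\<Sum>i<m. (\<integral>y. (if f y = i then h y else 0) \<partial>rho) * G i)
      = (\<Sum>i<m. (\<integral>y. (if f y = i then h y else 0) * G i \<partial>rho))"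
    by (rule sum.cong[OF refl]) (rule Bochner_Integration.integral_mult_left_zero[symmetric])
  also have "\<dots> = (\<integral>y. (\<Sum>i<m. (if f y = i then h y else 0) * G i) \<partial>rho)"
    by (rule Bochner_Integration.integral_sum[symmetric]) (use int_if[OF h f] in auto)
  also have "\<dots> = (\<integral>y. h y * G (f y) \<partial>rho)"
  proof (rule Bochner_Integration.integral_cong[OF refl])
    fix y assume "y \<in> space rho"
    then have "f y < m" using fm space_rho by auto
    then show "(\<Sum>i<m. (if f y = i then h y else 0) * G i) = h y * G (f y)"
      by (simp add: if_distrib[of "\<lambda>v. v * G _"] sum.delta' cong: if_cong)
  qed
  finally show ?thesis .
qed

lemma quant2: assumes "e > 0"
  shows "\<exists>m z f. (\<forall>i<m. z i \<in> X) \<and> f \<in> measurable rho (count_space UNIV) \<and>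
      (\<forall>y\<in>X. f y < (m::nat) \<and> (\<forall>b\<in>X. \<bar>k (z (f y)) b - k y b\<bar> < e))"
proof -
  obtain d where d: "d > 0" "\<And>a a' b b'. a \<in> X \<Longrightarrow> a' \<in> X \<Longrightarrow> b \<in> X \<Longrightarrow> b' \<in> X \<Longrightarrow>
     dist a a' < d \<Longrightarrow> dist b b' < d \<Longrightarrow> \<bar>k a b - k a' b'\<bar> < e"
    using kunif[OF assms] by metis
  obtain m :: nat and z f where q: "\<And>i. i < m \<Longrightarrow> z i \<in> X" "f \<in> measurable rho (count_space UNIV)"
    "\<And>y. y \<in> X \<Longrightarrow> f y < m \<and> dist y (z (f y)) < d"
    using quantizer[OF d(1)] by metis
  have "\<forall>y\<in>X. f y < m \<and> (\<forall>b\<in>X. \<bar>k (z (f y)) b - k y b\<bar> < e)"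
  proof (intro ballI conjI)
    fix y b assume "y \<in> X" "b \<in> X"
    then show "\<bar>k (z (f y)) b - k y b\<bar> < e"
      using d q(1)[of "f y"] q(3)[of y] by (simp add: dist_commute)
  next
    fix y assume "y \<in> X" then show "f y < m" using q by auto
  qed
  then show ?thesis using q(1,2) by blast
qed

end


lemma conv_helper:
  fixes a :: "nat \<Rightarrow> real"
  assumes "\<And>n. \<bar>a n - L\<bar> \<le> B * inverse (real (Suc n))"
  shows "a \<longlonglongrightarrow> L"
proof -
  have "(\<lambda>n. B * inverse (real (Suc n))) \<longlonglongrightarrow> B * 0"
    by (intro tendsto_mult tendsto_const LIMSEQ_inverse_real_of_nat)
  then have g0: "(\<lambda>n. B * inverse (real (Suc n))) \<longlonglongrightarrow> 0" by simp
  have "(\<lambda>n. a n - L) \<longlonglongrightarrow> 0"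
  proof (rule Lim_null_comparison[OF _ g0])
    show "\<forall>\<^sub>F n in sequentially. norm (a n - L) \<le> B * inverse (real (Suc n))"
      using assms by (intro always_eventually allI) (simp add: real_norm_def)
  qed
  then show ?thesis by (simp add: Lim_null[of a])
qed

context kset begin

lemma Tball:
  assumes h: "integrable rho h" and R1: "(\<integral>y. h y * (\<integral>z. k y z * h z \<partial>rho) \<partial>rho) \<le> 1"
  shows "(\<lambda>x. \<integral>y. k x y * h y \<partial>rho) \<in> rkhs_ball X k"
proof -
  define Th where "Th x = (\<integral>y. k x y * h y \<partial>rho)" for x
  define R where "R = (\<integral>y. h y * Th y \<partial>rho)"
  define A where "A = (\<integral>y. \<bar>h y\<bar> \<partial>rho)"
  define ep where "ep n = inverse (real (Suc n))" for n :: nat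
  have A0: "A \<ge> 0" unfolding A_def by simp
  have ep0: "ep n > 0" for n unfolding ep_def by simp
  obtain C where C: "C \<ge> 0" "\<And>x y. x \<in> X \<Longrightarrow> y \<in> X \<Longrightarrow> \<bar>k x y\<bar> \<le> C" using kbound by blast
  have hm[measurable]: "h \<in> borel_measurable rho" using h by auto
  have Thm[measurable]: "Th \<in> borel_measurable rho"
    using meas_cont[OF Tcont[OF h]] unfolding Th_def[abs_def] .
  have ThB: "\<bar>Th y\<bar> \<le> C * A" if y: "y \<in> X" for y
  proof -
    have "\<bar>\<integral>z. h z * k y z \<partial>rho\<bar> \<le> C * A"
      unfolding A_def by (rule int_bdd(2)[OF h meas_cont[OF kx_cont(1)[OF y]]]) (use C y in auto)
    then show ?thesis unfolding Th_def by (simp add: mult.commute)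
  qed
  define P where "P n m z f \<longleftrightarrow> (\<forall>i<m. z i \<in> X) \<and> f \<in> measurable rho (count_space UNIV) \<and>
      (\<forall>y\<in>X. f y < (m::nat) \<and> (\<forall>b\<in>X. \<bar>k (z (f y)) b - k y b\<bar> < ep n))" for n m z f
  have "\<forall>n. \<exists>m z f. P n m z f"
    unfolding P_def using quant2[OF ep0] by blast
  then obtain M where "\<forall>n. \<exists>z f. P n (M n) z f" by (metis choice)
  then obtain Z where "\<forall>n. \<exists>f. P n (M n) (Z n) f" by (metis choice)
  then obtain F where "\<forall>n. P n (M n) (Z n) (F n)" by (metis choice)
  then have MZF: "\<And>n. (\<forall>i<M n. Z n i \<in> X) \<and> F n \<in> measurable rho (count_space UNIV) \<and>
      (\<forall>y\<in>X. F n y < M n \<and> (\<forall>b\<in>X. \<bar>k (Z n (F n y)) b - k y b\<bar> < ep n))"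
    unfolding P_def by blast
  have Fm: "F n \<in> measurable rho (count_space UNIV)" for n using MZF by blast
  have FM: "\<And>y. y \<in> X \<Longrightarrow> F n y < M n" for n using MZF by blast
  have ZX: "y \<in> X \<Longrightarrow> Z n (F n y) \<in> X" for n y using MZF by blast
  have Zap: "y \<in> X \<Longrightarrow> b \<in> X \<Longrightarrow> \<bar>k (Z n (F n y)) b - k y b\<bar> < ep n" for n y b using MZF by blast
  define c where "c n i = (\<integral>y. (if F n y = i then h y else 0) \<partial>rho)" for n i
  define FF where "FF n = (c n, Z n, M n)" for n
  have eval: "krep_eval k (FF n) x = (\<integral>y. h y * k (Z n (F n y)) x \<partial>rho)" for n x
    unfolding krep_eval_def FF_def c_def using sumint[OF h Fm[of n] FM[of _ n], where G="\<lambda>i. k (Z n i) x"] by simp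
  have ip: "krep_ip k (FF p) (FF q) = (\<integral>y. h y * (\<integral>z. h z * k (Z p (F p y)) (Z q (F q z)) \<partial>rho) \<partial>rho)" for p q
  proof -
    have "krep_ip k (FF p) (FF q) = (\<Sum>i<M p. c p i * (\<Sum>j<M q. c q j * k (Z p i) (Z q j)))"
      unfolding krep_ip_def FF_def by (simp add: sum_distrib_left mult.assoc)
    also have "\<dots> = (\<Sum>i<M p. c p i * (\<integral>z. h z * k (Z p i) (Z q (F q z)) \<partial>rho))"
      unfolding c_def using sumint[OF h Fm[of q] FM[of _ q]] by simp
    also have "\<dots> = (\<integral>y. h y * (\<integral>z. h z * k (Z p (F p y)) (Z q (F q z)) \<partial>rho) \<partial>rho)"
      unfolding c_def using sumint[OF h Fm[of p] FM[of _ p], where G="\<lambda>i. \<integral>z. h z * k (Z p i) (Z q (F q z)) \<partial>rho"] by simp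
    finally show ?thesis .
  qed
  have evalb: "\<bar>krep_eval k (FF n) x - Th x\<bar> \<le> ep n * A" if x: "x \<in> X" for n x
  proof -
    have i1: "integrable rho (\<lambda>y. h y * k (Z n (F n y)) x)"
      by (rule int_bdd(1)[OF h meas_nat[OF Fm[of n]], where B=C]) (use C ZX x in auto)
    have "krep_eval k (FF n) x - Th x = (\<integral>y. h y * (k (Z n (F n y)) x - k x y) \<partial>rho)"
      unfolding eval Th_def
      by (subst Bochner_Integration.integral_diff[symmetric])
         (auto intro!: i1 kint x h Bochner_Integration.integral_cong simp: algebra_simps)
    also have "\<bar>\<dots>\<bar> \<le> ep n * A"
      unfolding A_def
    proof (rule int_bdd(2)[OF h, of "\<lambda>y. k (Z n (F n y)) x - k x y" "ep n"])
      show "(\<lambda>y. k (Z n (F n y)) x - k x y) \<in> borel_measurable rho"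
        using meas_nat[OF Fm[of n], where G="\<lambda>i. k (Z n i) x"] meas_cont[OF kx_cont(1)[OF x]] by measurable
      fix y assume y: "y \<in> X"
      then show "\<bar>k (Z n (F n y)) x - k x y\<bar> \<le> ep n"
        using Zap[OF y x, of n] ksym[OF x y] by simp
    qed
    finally show ?thesis .
  qed
  have ipb: "\<bar>krep_ip k (FF p) (FF q) - R\<bar> \<le> (ep p + ep q) * A * A" for p q
  proof -
    define G where "G y = (\<integral>z. h z * k (Z p (F p y)) (Z q (F q z)) \<partial>rho)" for y
    have Gm[measurable]: "G \<in> borel_measurable rho"
      using meas_nat[OF Fm[of p], where G="\<lambda>i. \<integral>z. h z * k (Z p i) (Z q (F q z)) \<partial>rho"] unfolding G_def .
    have iz: "integrable rho (\<lambda>z. h z * k (Z p (F p y)) (Z q (F q z)))" if y: "y \<in> X" for y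
      by (rule int_bdd(1)[OF h meas_nat[OF Fm[of q]], where B=C]) (use C ZX y in auto)
    have GB: "\<bar>G y\<bar> \<le> C * A" if y: "y \<in> X" for y
      unfolding G_def A_def by (rule int_bdd(2)[OF h meas_nat[OF Fm[of q]], where B=C]) (use C ZX y in auto)
    have GT: "\<bar>G y - Th y\<bar> \<le> (ep p + ep q) * A" if y: "y \<in> X" for y
    proof -
      have "G y - Th y = (\<integral>z. h z * (k (Z p (F p y)) (Z q (F q z)) - k y z) \<partial>rho)"
        unfolding G_def Th_def
        by (subst Bochner_Integration.integral_diff[symmetric])
           (auto intro!: iz y kint h Bochner_Integration.integral_cong simp: algebra_simps)
      also have "\<bar>\<dots>\<bar> \<le> (ep p + ep q) * A"
        unfolding A_def
      proof (rule int_bdd(2)[OF h, of "\<lambda>z. k (Z p (F p y)) (Z q (F q z)) - k y z" "ep p + ep q"])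
        show "(\<lambda>z. k (Z p (F p y)) (Z q (F q z)) - k y z) \<in> borel_measurable rho"
          using meas_nat[OF Fm[of q], where G="\<lambda>i. k (Z p (F p y)) (Z q i)"] meas_cont[OF kx_cont(1)[OF y]] by measurable
        fix z assume z: "z \<in> X"
        have a: "\<bar>k (Z p (F p y)) (Z q (F q z)) - k y (Z q (F q z))\<bar> < ep p"
          using Zap[OF y ZX[OF z], of p] .
        have b: "\<bar>k (Z q (F q z)) y - k z y\<bar> < ep q" using Zap[OF z y, of q] .
        have "k y (Z q (F q z)) = k (Z q (F q z)) y" using ksym ZX[OF z] y by auto
        moreover have "k y z = k z y" using ksym y z by auto
        ultimately show "\<bar>k (Z p (F p y)) (Z q (F q z)) - k y z\<bar> \<le> ep p + ep q"
          using a b by linarith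
      qed
      finally show ?thesis .
    qed
    have i1: "integrable rho (\<lambda>y. h y * G y)"
      by (rule int_bdd(1)[OF h Gm, of "C * A"]) (use GB in auto)
    have i2: "integrable rho (\<lambda>y. h y * Th y)"
      by (rule int_bdd(1)[OF h Thm, of "C * A"]) (use ThB in auto)
    have i1c: "integrable rho (\<lambda>y. G y * h y)" using i1 by (simp add: mult.commute)
    have i2c: "integrable rho (\<lambda>y. Th y * h y)" using i2 by (simp add: mult.commute)
    have "krep_ip k (FF p) (FF q) - R = (\<integral>y. h y * (G y - Th y) \<partial>rho)"
      unfolding ip R_def G_def[symmetric]
      by (subst Bochner_Integration.integral_diff[symmetric])
         (auto intro!: i1 i2 i1c i2c Bochner_Integration.integral_cong simp: algebra_simps)
    also have "\<bar>\<dots>\<bar> \<le> (ep p + ep q) * A * A"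
      unfolding A_def
      by (rule int_bdd(2)[OF h, of "\<lambda>y. G y - Th y" "(ep p + ep q) * A", unfolded A_def]) (use GT in \<open>auto simp: A_def\<close>)
    finally show ?thesis .
  qed
  have "Th \<in> rkhs_ball X k"
    unfolding rkhs_ball_def mem_Collect_eq
  proof (intro exI[of _ FF] conjI allI ballI impI)
    fix n show "krep_in X (FF n)" unfolding krep_in_def FF_def using MZF by auto
  next
    fix e :: real assume e: "e > 0"
    obtain N where N: "8 * A * A / e < real N" using reals_Archimedean2 by blast
    have epN: "n \<ge> N \<Longrightarrow> ep n \<le> inverse (real (Suc N))" for n
      unfolding ep_def by (simp add: le_imp_inverse_le)
    have key: "8 * A * A * inverse (real (Suc N)) < e"
    proof -
      have "8 * A * A < e * real (Suc N)" using N e by (simp add: field_simps)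
      then show ?thesis by (simp add: field_simps)
    qed
    show "\<exists>N. \<forall>p\<ge>N. \<forall>q\<ge>N. krep_dist2 k (FF p) (FF q) < e"
    proof (intro exI[of _ N] allI impI)
      fix p q assume pq: "p \<ge> N" "q \<ge> N"
      have "krep_dist2 k (FF p) (FF q) \<le> \<bar>krep_ip k (FF p) (FF p) - R\<bar> + 2 * \<bar>krep_ip k (FF p) (FF q) - R\<bar> + \<bar>krep_ip k (FF q) (FF q) - R\<bar>"
        unfolding krep_dist2_def
        using abs_ge_self[of "krep_ip k (FF p) (FF p) - R"] abs_ge_minus_self[of "krep_ip k (FF p) (FF q) - R"]
          abs_ge_self[of "krep_ip k (FF q) (FF q) - R"] by (smt (verit))
      also have "\<dots> \<le> (ep p + ep p) * A * A + 2 * ((ep p + ep q) * A * A) + (ep q + ep q) * A * A"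
        using ipb[of p p] ipb[of p q] ipb[of q q] by (smt (verit))
      also have "\<dots> = 4 * A * A * (ep p + ep q)" by (simp add: algebra_simps)
      also have "\<dots> \<le> 4 * A * A * (inverse (real (Suc N)) + inverse (real (Suc N)))"
        using epN[OF pq(1)] epN[OF pq(2)] A0 by (intro mult_left_mono) auto
      also have "\<dots> < e" using key by (simp add: algebra_simps)
      finally show "krep_dist2 k (FF p) (FF q) < e" .
    qed
  next
    fix x assume x: "x \<in> X"
    show "(\<lambda>n. krep_eval k (FF n) x) \<longlonglongrightarrow> Th x"
      by (rule conv_helper[of _ _ A]) (use evalb[OF x] in \<open>auto simp: ep_def mult.commute\<close>)
  next
    have "(\<lambda>n. krep_ip k (FF n) (FF n)) \<longlonglongrightarrow> R"
    proof (rule conv_helper[of _ _ "2 * A * A"])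
      fix n show "\<bar>krep_ip k (FF n) (FF n) - R\<bar> \<le> 2 * A * A * inverse (real (Suc n))"
        using ipb[of n n] by (simp add: ep_def algebra_simps)
    qed
    moreover have "R \<le> 1" using R1 unfolding R_def Th_def .
    ultimately show "\<exists>L\<le>1. (\<lambda>n. krep_ip k (FF n) (FF n)) \<longlonglongrightarrow> L" by blast
  qed
  then show ?thesis unfolding Th_def[abs_def] .
qed

end


lemma homog:
  fixes A :: "nat \<Rightarrow> nat \<Rightarrow> real"
  assumes "finite J" "m < card J"
  shows "\<exists>b. (\<forall>j. j \<notin> J \<longrightarrow> b j = 0) \<and> (\<exists>j\<in>J. b j \<noteq> 0) \<and> (\<forall>i<m. (\<Sum>j\<in>J. A i j * b j) = 0)"
  using assms
proof (induction m arbitrary: J A)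
  case 0
  then obtain j0 where "j0 \<in> J" by (metis card.empty ex_in_conv less_irrefl)
  then show ?case by (intro exI[of _ "\<lambda>j. if j = j0 then 1 else 0"]) auto
next
  case (Suc m)
  show ?case
  proof (cases "\<forall>j\<in>J. A m j = 0")
    case True
    obtain b where b: "\<forall>j. j \<notin> J \<longrightarrow> b j = 0" "\<exists>j\<in>J. b j \<noteq> 0" "\<forall>i<m. (\<Sum>j\<in>J. A i j * b j) = 0"
      using Suc.IH[of J A] Suc.prems by auto
    have "\<forall>i<Suc m. (\<Sum>j\<in>J. A i j * b j) = 0"
    proof (intro allI impI)
      fix i assume "i < Suc m"
      then consider "i < m" | "i = m" by linarith
      then show "(\<Sum>j\<in>J. A i j * b j) = 0"
        by cases (use b True in auto)
    qed
    then show ?thesis using b by blast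
  next
    case False
    then obtain p where p: "p \<in> J" "A m p \<noteq> 0" by blast
    define J' where "J' = J - {p}"
    have fJ': "finite J'" using Suc.prems unfolding J'_def by auto
    have cJ': "m < card J'" using Suc.prems p unfolding J'_def by auto
    define A' where "A' i j = A i j - A i p * A m j / A m p" for i j
    obtain b' where b': "\<forall>j. j \<notin> J' \<longrightarrow> b' j = 0" "\<exists>j\<in>J'. b' j \<noteq> 0" "\<forall>i<m. (\<Sum>j\<in>J'. A' i j * b' j) = 0"
      using Suc.IH[OF fJ' cJ', of A'] by blast
    define S where "S = (\<Sum>j\<in>J'. A m j * b' j)"
    define b where "b = b'(p := - S / A m p)"
    have split: "(\<Sum>j\<in>J. A i j * b j) = A i p * (- S / A m p) + (\<Sum>j\<in>J'. A i j * b' j)" for i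
    proof -
      have "(\<Sum>j\<in>J. A i j * b j) = A i p * b p + (\<Sum>j\<in>J'. A i j * b j)"
        unfolding J'_def using Suc.prems(1) p(1) by (simp add: sum.remove)
      also have "(\<Sum>j\<in>J'. A i j * b j) = (\<Sum>j\<in>J'. A i j * b' j)"
        unfolding b_def J'_def by (intro sum.cong) auto
      finally show ?thesis unfolding b_def by simp
    qed
    have eqs: "\<forall>i<Suc m. (\<Sum>j\<in>J. A i j * b j) = 0"
    proof (intro allI impI)
      fix i assume "i < Suc m"
      then consider "i < m" | "i = m" by linarith
      then show "(\<Sum>j\<in>J. A i j * b j) = 0"
      proof cases
        case 1
        have "0 = (\<Sum>j\<in>J'. A' i j * b' j)" using b'(3) 1 by simp
        also have "\<dots> = (\<Sum>j\<in>J'. A i j * b' j) - A i p / A m p * S"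
          unfolding A'_def S_def by (simp add: algebra_simps sum_subtractf sum_distrib_left)
        finally have "(\<Sum>j\<in>J'. A i j * b' j) = A i p / A m p * S" by simp
        then show ?thesis unfolding split by simp
      next
        case 2
        then show ?thesis unfolding split S_def using p(2) by simp
      qed
    qed
    have "\<forall>j. j \<notin> J \<longrightarrow> b j = 0" using b'(1) p(1) unfolding b_def J'_def by auto
    moreover have "\<exists>j\<in>J. b j \<noteq> 0" using b'(2) unfolding b_def J'_def by auto
    ultimately show ?thesis using eqs by blast
  qed
qed

lemma sum_support:
  fixes c b :: "nat \<Rightarrow> real"
  assumes "\<forall>l. l > m \<longrightarrow> b l = 0" "m < T"
  shows "(\<Sum>l<T. c l * b l) = (\<Sum>l<Suc m. c l * b l)"
  by (rule sum.mono_neutral_right) (use assms in auto)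

lemma onb:
  fixes U :: "nat \<Rightarrow> nat \<Rightarrow> real"
  assumes "N \<le> T"
  shows "\<exists>B :: nat \<Rightarrow> nat \<Rightarrow> real. (\<forall>m\<in>{n..<N}. \<forall>l. l > m \<longrightarrow> B m l = 0) \<and>
     (\<forall>m\<in>{n..<N}. \<forall>m'\<in>{n..<N}. (\<Sum>l<T. B m l * B m' l) = (if m = m' then 1 else 0)) \<and>
     (\<forall>m\<in>{n..<N}. \<forall>i<n. (\<Sum>l<T. U i l * B m l) = 0)"
  using assms
proof (induction N)
  case 0
  then show ?case by auto
next
  case (Suc N)
  then obtain B where B: "\<forall>m\<in>{n..<N}. \<forall>l. l > m \<longrightarrow> B m l = 0"
     "\<forall>m\<in>{n..<N}. \<forall>m'\<in>{n..<N}. (\<Sum>l<T. B m l * B m' l) = (if m = m' then 1 else 0)"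
     "\<forall>m\<in>{n..<N}. \<forall>i<n. (\<Sum>l<T. U i l * B m l) = 0" by auto
  show ?case
  proof (cases "N < n")
    case True
    then have "{n..<Suc N} = {}" by auto
    then show ?thesis by auto
  next
    case False
    define A where "A i l = (if i < n then U i l else B i l)" for i l
    obtain b where b: "\<forall>j. j \<notin> {..<Suc N} \<longrightarrow> b j = 0" "\<exists>j\<in>{..<Suc N}. b j \<noteq> 0"
        "\<forall>i<N. (\<Sum>j\<in>{..<Suc N}. A i j * b j) = 0"
      using homog[of "{..<Suc N}" N A] by auto
    have bs: "\<forall>l. l > N \<longrightarrow> b l = 0" using b(1) by auto
    have NT: "N < T" using Suc.prems by simp
    define s where "s = (\<Sum>l<T. b l * b l)"
    have "s = (\<Sum>l<Suc N. b l * b l)" unfolding s_def by (rule sum_support[OF bs NT])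
    moreover obtain j where j: "j < Suc N" "b j \<noteq> 0" using b(2) by auto
    moreover have "b j * b j \<le> (\<Sum>l<Suc N. b l * b l)"
      by (rule member_le_sum) (use j in auto)
    moreover have "b j * b j > 0" using j by (simp add: zero_less_mult_iff linorder_neq_iff) blast
    ultimately have s0: "s > 0" by linarith
    define b' where "b' l = b l / sqrt s" for l
    define B' where "B' = B(N := b')"
    have eqb: "(\<Sum>l<T. A i l * b l) = 0" if "i < N" for i
      using b(3) that sum_support[OF bs NT, of "A i"] by simp
    have "\<forall>m\<in>{n..<Suc N}. \<forall>l. l > m \<longrightarrow> B' m l = 0"
      using B(1) bs unfolding B'_def b'_def by (auto simp: less_Suc_eq)
    moreover have "\<forall>m\<in>{n..<Suc N}. \<forall>m'\<in>{n..<Suc N}. (\<Sum>l<T. B' m l * B' m' l) = (if m = m' then 1 else 0)"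
    proof (intro ballI)
      fix m m' assume m: "m \<in> {n..<Suc N}" and m': "m' \<in> {n..<Suc N}"
      have new: "(\<Sum>l<T. b' l * B m l) = 0" if "m \<in> {n..<N}" for m
      proof -
        have "(\<Sum>l<T. b' l * B m l) = (\<Sum>l<T. A m l * b l) / sqrt s"
          unfolding b'_def A_def using that by (simp add: sum_divide_distrib mult.commute)
        then show ?thesis using eqb[of m] that by simp
      qed
      have self: "(\<Sum>l<T. b' l * b' l) = 1"
        unfolding b'_def using s0 by (simp add: s_def[symmetric] sum_divide_distrib[symmetric] real_sqrt_mult[symmetric] flip: times_divide_times_eq)
      show "(\<Sum>l<T. B' m l * B' m' l) = (if m = m' then 1 else 0)"
        using m m' B(2) new self new[of m] new[of m'] unfolding B'_def
        by (cases "m = N"; cases "m' = N") (auto simp: less_Suc_eq mult.commute)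
    qed
    moreover have "\<forall>m\<in>{n..<Suc N}. \<forall>i<n. (\<Sum>l<T. U i l * B' m l) = 0"
    proof (intro ballI allI impI)
      fix m i assume m: "m \<in> {n..<Suc N}" and i: "i < n"
      show "(\<Sum>l<T. U i l * B' m l) = 0"
      proof (cases "m = N")
        case True
        have "(\<Sum>l<T. U i l * b' l) = (\<Sum>l<T. A i l * b l) / sqrt s"
          unfolding b'_def A_def using i by (simp add: sum_divide_distrib)
        then show ?thesis using True eqb[of i] i False unfolding B'_def by simp
      next
        case False
        then show ?thesis using B(3) m i unfolding B'_def by auto
      qed
    qed
    ultimately show ?thesis by blast
  qed
qed


context kset begin

lemma l2_int: fixes f :: "'a \<Rightarrow> real" assumes "f \<in> borel_measurable rho" "integrable rho (\<lambda>x. (f x)\<^sup>2)"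
  shows "integrable rho f"
  using finite_measure.square_integrable_imp_integrable[of rho f] assms ps
  by (simp add: prob_space_def)

lemma l2_prod: fixes f g :: "'a \<Rightarrow> real" assumes "f \<in> borel_measurable rho" "integrable rho (\<lambda>x. (f x)\<^sup>2)"
  "g \<in> borel_measurable rho" "integrable rho (\<lambda>x. (g x)\<^sup>2)"
  shows "integrable rho (\<lambda>x. f x * g x)"
proof (rule Bochner_Integration.integrable_bound[where f="\<lambda>x. (f x)\<^sup>2 + (g x)\<^sup>2"])
  show "integrable rho (\<lambda>x. (f x)\<^sup>2 + (g x)\<^sup>2)" using assms by auto
  show "(\<lambda>x. f x * g x) \<in> borel_measurable rho" using assms by measurable
  show "AE x in rho. norm (f x * g x) \<le> norm ((f x)\<^sup>2 + (g x)\<^sup>2)"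
  proof (intro AE_I2)
    fix x
    have "2 * \<bar>f x\<bar> * \<bar>g x\<bar> \<le> (f x)\<^sup>2 + (g x)\<^sup>2"
      using sum_squares_bound[of "\<bar>f x\<bar>" "\<bar>g x\<bar>"] by (simp add: power2_abs)
    moreover have "\<bar>f x\<bar> * \<bar>g x\<bar> \<ge> 0" by simp
    moreover have "norm (f x * g x) = \<bar>f x\<bar> * \<bar>g x\<bar>" by (simp add: abs_mult)
    moreover have "norm ((f x)\<^sup>2 + (g x)\<^sup>2) = (f x)\<^sup>2 + (g x)\<^sup>2" by simp
    ultimately show "norm (f x * g x) \<le> norm ((f x)\<^sup>2 + (g x)\<^sup>2)"
      by linarith
  qed
qed

lemma Tsym:
  assumes p: "integrable rho p" and q: "integrable rho q"
  shows "(\<integral>x. p x * (\<integral>y. k x y * q y \<partial>rho) \<partial>rho) = (\<integral>x. q x * (\<integral>y. k x y * p y \<partial>rho) \<partial>rho)"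
proof -
  define Tp where "Tp x = (\<integral>y. k x y * p y \<partial>rho)" for x
  define Tq where "Tq x = (\<integral>y. k x y * q y \<partial>rho)" for x
  define Ap where "Ap = (\<integral>y. \<bar>p y\<bar> \<partial>rho)"
  define Aq where "Aq = (\<integral>y. \<bar>q y\<bar> \<partial>rho)"
  have Ap0: "Ap \<ge> 0" and Aq0: "Aq \<ge> 0" unfolding Ap_def Aq_def by simp_all
  obtain C where C: "C \<ge> 0" "\<And>x y. x \<in> X \<Longrightarrow> y \<in> X \<Longrightarrow> \<bar>k x y\<bar> \<le> C" using kbound by blast
  have pm[measurable]: "p \<in> borel_measurable rho" using p by auto
  have qm[measurable]: "q \<in> borel_measurable rho" using q by auto
  have Tpm[measurable]: "Tp \<in> borel_measurable rho"
    using meas_cont[OF Tcont[OF p]] unfolding Tp_def[abs_def] .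
  have Tqm[measurable]: "Tq \<in> borel_measurable rho"
    using meas_cont[OF Tcont[OF q]] unfolding Tq_def[abs_def] .
  have TpB: "\<bar>Tp y\<bar> \<le> C * Ap" if y: "y \<in> X" for y
  proof -
    have "\<bar>\<integral>z. p z * k y z \<partial>rho\<bar> \<le> C * Ap"
      unfolding Ap_def by (rule int_bdd(2)[OF p meas_cont[OF kx_cont(1)[OF y]]]) (use C y in auto)
    then show ?thesis unfolding Tp_def by (simp add: mult.commute)
  qed
  have TqB: "\<bar>Tq y\<bar> \<le> C * Aq" if y: "y \<in> X" for y
  proof -
    have "\<bar>\<integral>z. q z * k y z \<partial>rho\<bar> \<le> C * Aq"
      unfolding Aq_def by (rule int_bdd(2)[OF q meas_cont[OF kx_cont(1)[OF y]]]) (use C y in auto)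
    then show ?thesis unfolding Tq_def by (simp add: mult.commute)
  qed
  have bound: "\<bar>(\<integral>x. p x * Tq x \<partial>rho) - (\<integral>x. q x * Tp x \<partial>rho)\<bar> \<le> 2 * Ap * Aq * e" if e: "e > 0" for e
  proof -
    obtain m z f where mzf: "\<forall>i<m. z i \<in> X" "f \<in> measurable rho (count_space UNIV)"
      "\<forall>y\<in>X. f y < (m::nat) \<and> (\<forall>b\<in>X. \<bar>k (z (f y)) b - k y b\<bar> < e)"
      using quant2[OF e] by blast
    have fm: "\<And>y. y \<in> X \<Longrightarrow> f y < m" using mzf by blast
    have zX: "y \<in> X \<Longrightarrow> z (f y) \<in> X" for y using mzf by blast
    have zap: "y \<in> X \<Longrightarrow> b \<in> X \<Longrightarrow> \<bar>k (z (f y)) b - k y b\<bar> < e" for y b using mzf by blast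
    define c where "c i = (\<integral>y. (if f y = i then q y else 0) \<partial>rho)" for i
    define V where "V x = (\<Sum>i<m. c i * k (z i) x)" for x
    have Vm[measurable]: "V \<in> borel_measurable rho"
      unfolding V_def using meas_cont[OF kx_cont(1)] mzf(1) by (intro borel_measurable_sum borel_measurable_times) auto
    have Veq: "V x = (\<integral>y. q y * k (z (f y)) x \<partial>rho)" for x
      unfolding V_def c_def using sumint[OF q mzf(2) fm, where G="\<lambda>i. k (z i) x"] by simp
    have VB: "\<bar>V x\<bar> \<le> C * Aq" if x: "x \<in> X" for x
      unfolding Veq Aq_def by (rule int_bdd(2)[OF q meas_nat[OF mzf(2)], where B=C]) (use C zX x in auto)
    have TV: "\<bar>Tq x - V x\<bar> \<le> e * Aq" if x: "x \<in> X" for x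
    proof -
      have i1: "integrable rho (\<lambda>y. q y * k (z (f y)) x)"
        by (rule int_bdd(1)[OF q meas_nat[OF mzf(2)], where B=C]) (use C zX x in auto)
      have "Tq x - V x = (\<integral>y. q y * (k x y - k (z (f y)) x) \<partial>rho)"
        unfolding Veq Tq_def
        by (subst Bochner_Integration.integral_diff[symmetric])
           (auto intro!: i1 kint x q Bochner_Integration.integral_cong simp: algebra_simps)
      also have "\<bar>\<dots>\<bar> \<le> e * Aq"
        unfolding Aq_def
      proof (rule int_bdd(2)[OF q, of "\<lambda>y. k x y - k (z (f y)) x" e])
        show "(\<lambda>y. k x y - k (z (f y)) x) \<in> borel_measurable rho"
          using meas_nat[OF mzf(2), where G="\<lambda>i. k (z i) x"] meas_cont[OF kx_cont(1)[OF x]] by measurable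
        fix y assume y: "y \<in> X"
        then show "\<bar>k x y - k (z (f y)) x\<bar> \<le> e"
          using zap[OF y x] ksym[OF x y] by simp
      qed
      finally show ?thesis .
    qed
    have TpZ: "\<bar>Tp (z (f y)) - Tp y\<bar> \<le> e * Ap" if y: "y \<in> X" for y
    proof -
      have "Tp (z (f y)) - Tp y = (\<integral>x. p x * (k (z (f y)) x - k y x) \<partial>rho)"
        unfolding Tp_def
        by (subst Bochner_Integration.integral_diff[symmetric])
           (auto intro!: kint y zX p Bochner_Integration.integral_cong simp: algebra_simps)
      also have "\<bar>\<dots>\<bar> \<le> e * Ap"
        unfolding Ap_def
      proof (rule int_bdd(2)[OF p, of "\<lambda>x. k (z (f y)) x - k y x" e])
        show "(\<lambda>x. k (z (f y)) x - k y x) \<in> borel_measurable rho"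
          using meas_cont[OF kx_cont(1)[OF zX[OF y]]] meas_cont[OF kx_cont(1)[OF y]] by measurable
        fix x assume x: "x \<in> X"
        then show "\<bar>k (z (f y)) x - k y x\<bar> \<le> e"
          using zap[OF y x] by simp
      qed
      finally show ?thesis .
    qed
    have TpZm: "(\<lambda>y. Tp (z (f y))) \<in> borel_measurable rho"
      using meas_nat[OF mzf(2), where G="\<lambda>i. Tp (z i)"] .
    have ipTq: "integrable rho (\<lambda>x. p x * Tq x)"
      by (rule int_bdd(1)[OF p Tqm, where B="C * Aq"]) (use TqB in auto)
    have ipV: "integrable rho (\<lambda>x. p x * V x)"
      by (rule int_bdd(1)[OF p Vm, where B="C * Aq"]) (use VB in auto)
    have iqTp: "integrable rho (\<lambda>x. q x * Tp x)"
      by (rule int_bdd(1)[OF q Tpm, where B="C * Ap"]) (use TpB in auto)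
    have iqTpZ: "integrable rho (\<lambda>x. q x * Tp (z (f x)))"
      by (rule int_bdd(1)[OF q TpZm, where B="C * Ap"]) (use TpB zX in auto)
    have mid: "(\<integral>x. p x * V x \<partial>rho) = (\<integral>y. q y * Tp (z (f y)) \<partial>rho)"
    proof -
      have "(\<integral>x. p x * V x \<partial>rho) = (\<integral>x. (\<Sum>i<m. c i * (p x * k (z i) x)) \<partial>rho)"
        unfolding V_def by (simp add: sum_distrib_left algebra_simps)
      also have "\<dots> = (\<Sum>i<m. c i * (\<integral>x. p x * k (z i) x \<partial>rho))"
        by (subst Bochner_Integration.integral_sum) (auto intro!: kint p simp: mzf(1))
      also have "\<dots> = (\<Sum>i<m. c i * Tp (z i))"
        unfolding Tp_def by (simp add: mult.commute)
      also have "\<dots> = (\<integral>y. q y * Tp (z (f y)) \<partial>rho)"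
        unfolding c_def using sumint[OF q mzf(2) fm, where G="\<lambda>i. Tp (z i)"] by simp
      finally show ?thesis .
    qed
    have d1: "\<bar>(\<integral>x. p x * Tq x \<partial>rho) - (\<integral>x. p x * V x \<partial>rho)\<bar> \<le> e * Aq * Ap"
    proof -
      have "(\<integral>x. p x * Tq x \<partial>rho) - (\<integral>x. p x * V x \<partial>rho) = (\<integral>x. p x * Tq x - p x * V x \<partial>rho)"
        by (rule Bochner_Integration.integral_diff[OF ipTq ipV, symmetric])
      also have "\<dots> = (\<integral>x. p x * (Tq x - V x) \<partial>rho)" by (simp add: right_diff_distrib)
      also have "\<bar>\<dots>\<bar> \<le> e * Aq * Ap"
        unfolding Ap_def by (rule int_bdd(2)[OF p, of "\<lambda>x. Tq x - V x"]) (use TV in auto)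
      finally show ?thesis .
    qed
    have d2: "\<bar>(\<integral>y. q y * Tp (z (f y)) \<partial>rho) - (\<integral>x. q x * Tp x \<partial>rho)\<bar> \<le> e * Ap * Aq"
    proof -
      have "(\<integral>y. q y * Tp (z (f y)) \<partial>rho) - (\<integral>x. q x * Tp x \<partial>rho) = (\<integral>x. q x * Tp (z (f x)) - q x * Tp x \<partial>rho)"
        by (rule Bochner_Integration.integral_diff[OF iqTpZ iqTp, symmetric])
      also have "\<dots> = (\<integral>x. q x * (Tp (z (f x)) - Tp x) \<partial>rho)" by (simp add: right_diff_distrib)
      also have "\<bar>\<dots>\<bar> \<le> e * Ap * Aq"
        unfolding Aq_def by (rule int_bdd(2)[OF q, of "\<lambda>x. Tp (z (f x)) - Tp x"]) (use TpZ TpZm in auto)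
      finally show ?thesis .
    qed
    have "2 * Ap * Aq * e = e * Aq * Ap + e * Ap * Aq" by (simp add: algebra_simps)
    then show ?thesis using d1 d2 mid by (smt (verit))
  qed
  have "(\<integral>x. p x * Tq x \<partial>rho) - (\<integral>x. q x * Tp x \<partial>rho) = 0"
  proof (rule ccontr)
    assume ne: "(\<integral>x. p x * Tq x \<partial>rho) - (\<integral>x. q x * Tp x \<partial>rho) \<noteq> 0"
    define D where "D = \<bar>(\<integral>x. p x * Tq x \<partial>rho) - (\<integral>x. q x * Tp x \<partial>rho)\<bar>"
    have D0: "D > 0" using ne unfolding D_def by simp
    define e where "e = D / (2 * (2 * Ap * Aq + 1))"
    have e0: "e > 0" using D0 Ap0 Aq0 unfolding e_def by (simp add: add_nonneg_pos)
    have "D \<le> 2 * Ap * Aq * e" using bound[OF e0] unfolding D_def .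
    also have "\<dots> < D"
    proof -
      have "2 * Ap * Aq * e = D * (2 * Ap * Aq) / (2 * (2 * Ap * Aq + 1))" unfolding e_def by simp
      also have "\<dots> < D"
      proof -
        have P0: "Ap * Aq \<ge> 0" using Ap0 Aq0 by simp
        have pos: "2 * (2 * Ap * Aq + 1) > 0" using P0 by simp
        have "D * (2 * Ap * Aq) < D * (2 * (2 * Ap * Aq + 1))"
          by (rule mult_strict_left_mono) (use P0 D0 in auto)
        then show ?thesis using pos by (simp add: pos_divide_less_eq mult.commute)
      qed
      finally show ?thesis .
    qed
    finally show False by simp
  qed
  then show ?thesis unfolding Tp_def Tq_def by simp
qed

end

context kset begin

lemma eig_orth:
  assumes pm: "p \<in> borel_measurable rho" and p2: "integrable rho (\<lambda>x. (p x)\<^sup>2)"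
    and pe: "AE x in rho. (\<integral>y. k x y * p y \<partial>rho) = mu * p x"
    and qm: "q \<in> borel_measurable rho" and q2: "integrable rho (\<lambda>x. (q x)\<^sup>2)"
    and qe: "AE x in rho. (\<integral>y. k x y * q y \<partial>rho) = nu * q x"
    and ne: "mu \<noteq> nu"
  shows "(\<integral>x. p x * q x \<partial>rho) = 0"
proof -
  have p: "integrable rho p" by (rule l2_int[OF pm p2])
  have q: "integrable rho q" by (rule l2_int[OF qm q2])
  have [measurable]: "(\<lambda>x. \<integral>y. k x y * p y \<partial>rho) \<in> borel_measurable rho" by (rule meas_cont[OF Tcont[OF p]])
  have [measurable]: "(\<lambda>x. \<integral>y. k x y * q y \<partial>rho) \<in> borel_measurable rho" by (rule meas_cont[OF Tcont[OF q]])
  have [measurable]: "p \<in> borel_measurable rho" "q \<in> borel_measurable rho" using pm qm by auto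
  have e1: "(\<integral>x. p x * (\<integral>y. k x y * q y \<partial>rho) \<partial>rho) = (\<integral>x. nu * (p x * q x) \<partial>rho)"
  proof (rule Bochner_Integration.integral_cong_AE)
    show "AE x in rho. p x * (\<integral>y. k x y * q y \<partial>rho) = nu * (p x * q x)"
      using qe by eventually_elim simp
  qed measurable
  have e2: "(\<integral>x. q x * (\<integral>y. k x y * p y \<partial>rho) \<partial>rho) = (\<integral>x. mu * (p x * q x) \<partial>rho)"
  proof (rule Bochner_Integration.integral_cong_AE)
    show "AE x in rho. q x * (\<integral>y. k x y * p y \<partial>rho) = mu * (p x * q x)"
      using pe by eventually_elim simp
  qed measurable
  have "nu * (\<integral>x. p x * q x \<partial>rho) = mu * (\<integral>x. p x * q x \<partial>rho)"
    using Tsym[OF p q] e1 e2 by simp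
  then show ?thesis using ne by simp
qed

lemma eig_family:
  assumes ke: "kernel_eigenvalues k rho lam" and pos: "\<forall>l<N. lam l > 0"
  shows "\<exists>phi. (\<forall>l<N. phi l \<in> borel_measurable rho \<and> integrable rho (\<lambda>x. (phi l x)\<^sup>2) \<and>
            (AE x in rho. (\<integral>y. k x y * phi l y \<partial>rho) = lam l * phi l x)) \<and>
          (\<forall>l<N. \<forall>l'<N. (\<integral>x. phi l x * phi l' x \<partial>rho) = (if l = l' then 1 else 0))"
proof -
  have anti: "antimono lam" and fin: "\<And>mu. mu > 0 \<Longrightarrow> finite {l. lam l = mu}"
    and em: "\<And>mu. mu > 0 \<Longrightarrow> eigen_mult k rho mu (card {l. lam l = mu})"
    using ke unfolding kernel_eigenvalues_def by auto
  define G where "G mu = (SOME g. eigen_onfamily k rho mu (card {l. lam l = mu}) g)" for mu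
  have G: "eigen_onfamily k rho mu (card {l. lam l = mu}) (G mu)" if "mu > 0" for mu
    using em[OF that] unfolding eigen_mult_def G_def by (metis someI_ex)
  define s where "s mu = (LEAST l. lam l = mu)" for mu
  define phi where "phi l = G (lam l) (l - s (lam l))" for l
  have sle: "s (lam l) \<le> l" for l unfolding s_def by (rule Least_le) simp
  have idx: "l - s (lam l) < card {j. lam j = lam l}" if l: "l < N" for l
  proof -
    have "lam (s (lam l)) = lam l" unfolding s_def by (rule LeastI) simp
    then have sub: "{s (lam l)..l} \<subseteq> {j. lam j = lam l}"
    proof (intro subsetI)
      fix j assume "j \<in> {s (lam l)..l}"
      then have "s (lam l) \<le> j" "j \<le> l" by auto
      then have "lam j \<le> lam (s (lam l))" "lam l \<le> lam j" using anti unfolding antimono_def by auto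
      then show "j \<in> {j. lam j = lam l}" using \<open>lam (s (lam l)) = lam l\<close> by auto
    qed
    have "card {s (lam l)..l} \<le> card {j. lam j = lam l}"
      by (rule card_mono[OF fin sub]) (use pos l in auto)
    then show ?thesis using sle[of l] by simp
  qed
  have prop1: "\<forall>l<N. phi l \<in> borel_measurable rho \<and> integrable rho (\<lambda>x. (phi l x)\<^sup>2) \<and>
            (AE x in rho. (\<integral>y. k x y * phi l y \<partial>rho) = lam l * phi l x)"
  proof (intro allI impI)
    fix l assume l: "l < N"
    have "eigen_onfamily k rho (lam l) (card {j. lam j = lam l}) (G (lam l))" using G pos l by auto
    then show "phi l \<in> borel_measurable rho \<and> integrable rho (\<lambda>x. (phi l x)\<^sup>2) \<and>
            (AE x in rho. (\<integral>y. k x y * phi l y \<partial>rho) = lam l * phi l x)"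
      unfolding eigen_onfamily_def phi_def using idx[OF l] by blast
  qed
  have prop2: "\<forall>l<N. \<forall>l'<N. (\<integral>x. phi l x * phi l' x \<partial>rho) = (if l = l' then 1 else 0)"
  proof (intro allI impI)
    fix l l' assume l: "l < N" and l': "l' < N"
    show "(\<integral>x. phi l x * phi l' x \<partial>rho) = (if l = l' then 1 else 0)"
    proof (cases "lam l = lam l'")
      case True
      have fam: "eigen_onfamily k rho (lam l) (card {j. lam j = lam l}) (G (lam l))" using G pos l by auto
      have i1: "l - s (lam l) < card {j. lam j = lam l}" using idx[OF l] .
      have i2: "l' - s (lam l) < card {j. lam j = lam l}" using idx[OF l'] True by simp
      have "(l - s (lam l) = l' - s (lam l)) = (l = l')" using sle[of l] sle[of l'] True by auto
      then show ?thesis using fam i1 i2 True unfolding eigen_onfamily_def phi_def by auto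
    next
      case False
      then show ?thesis using eig_orth[of "phi l" "lam l" "phi l'" "lam l'"] prop1 l l' by auto
    qed
  qed
  show ?thesis using prop1 prop2 by blast
qed

end


lemma lin_swap:
  fixes a :: "nat \<Rightarrow> real"
  shows "(\<Sum>l<T. (\<Sum>m\<in>M. a m * B m l) * u l) = (\<Sum>m\<in>M. a m * (\<Sum>l<T. B m l * u l))"
  by (simp add: sum_distrib_left sum_distrib_right mult_ac sum.swap[of _ M "{..<T}"])

lemma quad_swap:
  fixes a c :: "nat \<Rightarrow> real"
  shows "(\<Sum>l<T. (\<Sum>m\<in>M. a m * B m l) * (\<Sum>m'\<in>M. c m' * B m' l))
       = (\<Sum>m\<in>M. a m * (\<Sum>m'\<in>M. c m' * (\<Sum>l<T. B m l * B m' l)))"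
proof -
  have "(\<Sum>l<T. (\<Sum>m\<in>M. a m * B m l) * (\<Sum>m'\<in>M. c m' * B m' l))
      = (\<Sum>m\<in>M. a m * (\<Sum>l<T. B m l * (\<Sum>m'\<in>M. c m' * B m' l)))"
    by (rule lin_swap)
  also have "\<dots> = (\<Sum>m\<in>M. a m * (\<Sum>m'\<in>M. c m' * (\<Sum>l<T. B m l * B m' l)))"
  proof (rule sum.cong[OF refl])
    fix m
    have "(\<Sum>l<T. B m l * (\<Sum>m'\<in>M. c m' * B m' l)) = (\<Sum>l<T. (\<Sum>m'\<in>M. c m' * B m' l) * B m l)"
      by (simp add: mult.commute)
    also have "\<dots> = (\<Sum>m'\<in>M. c m' * (\<Sum>l<T. B m' l * B m l))" by (rule lin_swap)
    also have "\<dots> = (\<Sum>m'\<in>M. c m' * (\<Sum>l<T. B m l * B m' l))" by (simp add: mult.commute)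
    finally show "a m * (\<Sum>l<T. B m l * (\<Sum>m'\<in>M. c m' * B m' l)) = a m * (\<Sum>m'\<in>M. c m' * (\<Sum>l<T. B m l * B m' l))"
      by simp
  qed
  finally show ?thesis .
qed

lemma ortho_collapse:
  fixes c :: "nat \<Rightarrow> real"
  assumes "finite M" "m \<in> M" "\<forall>m'\<in>M. G m' = (if m = m' then 1 else 0)"
  shows "(\<Sum>m'\<in>M. c m' * G m') = c m"
proof -
  have "(\<Sum>m'\<in>M. c m' * G m') = (\<Sum>m'\<in>M. if m = m' then c m' else 0)"
    using assms(3) by (intro sum.cong) auto
  also have "\<dots> = c m" using assms(1,2) by (simp add: sum.delta)
  finally show ?thesis .
qed

lemma sqrt_helper:
  fixes L b T :: real
  assumes "L > 0"
  shows "b / sqrt L * T = b * (sqrt L * (T / L))"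
proof -
  have s: "sqrt L * sqrt L = L" using assms by simp
  have "sqrt L > 0" using assms by simp
  then show ?thesis by (subst s[symmetric]) (simp add: field_simps)
qed

lemma sqrt_helper2:
  fixes L b :: real
  assumes "L > 0"
  shows "b / sqrt L * b * sqrt L = b\<^sup>2"
  using assms by (simp add: power2_eq_square)


context kset begin

lemma core:
  assumes ke: "kernel_eigenvalues k rho lam" and pos: "\<forall>l<N. lam l > 0" and xs: "\<forall>i<n. xs i \<in> X"
  shows "ennreal (\<Sum>m\<in>{n..<N}. lam m) \<le>
    (\<integral>\<^sup>+ x. (SUP f\<in>{f \<in> rkhs_ball X k. \<forall>i<n. f (xs i) = 0}. ennreal ((f x)\<^sup>2)) \<partial>rho)"
proof -
  define S where "S x = (SUP f\<in>{f \<in> rkhs_ball X k. \<forall>i<n. f (xs i) = 0}. ennreal ((f x)\<^sup>2))" for x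
  obtain phi where ph: "\<forall>l<N. phi l \<in> borel_measurable rho \<and> integrable rho (\<lambda>x. (phi l x)\<^sup>2) \<and>
            (AE x in rho. (\<integral>y. k x y * phi l y \<partial>rho) = lam l * phi l x)"
     and po: "\<forall>l<N. \<forall>l'<N. (\<integral>x. phi l x * phi l' x \<partial>rho) = (if l = l' then 1 else 0)"
    using eig_family[OF ke pos] by blast
  have anti: "antimono lam" using ke unfolding kernel_eigenvalues_def by auto
  have phm[measurable]: "phi l \<in> borel_measurable rho" if "l < N" for l using ph that by blast
  have ph2: "integrable rho (\<lambda>x. (phi l x)\<^sup>2)" if "l < N" for l using ph that by blast
  have phe: "AE x in rho. (\<integral>y. k x y * phi l y \<partial>rho) = lam l * phi l x" if "l < N" for l using ph that by blast
  have phi_i: "integrable rho (phi l)" if "l < N" for l by (rule l2_int[OF phm[OF that] ph2[OF that]])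
  have phpp: "integrable rho (\<lambda>x. phi l x * phi l' x)" if "l < N" "l' < N" for l l'
    by (rule l2_prod[OF phm[OF that(1)] ph2[OF that(1)] phm[OF that(2)] ph2[OF that(2)]])
  define pt where "pt l x = (\<integral>y. k x y * phi l y \<partial>rho) / lam l" for l x
  have ptm[measurable]: "pt l \<in> borel_measurable rho" if "l < N" for l
  proof -
    have [measurable]: "(\<lambda>x. \<integral>y. k x y * phi l y \<partial>rho) \<in> borel_measurable rho"
      by (rule meas_cont[OF Tcont[OF phi_i[OF that]]])
    show ?thesis unfolding pt_def[abs_def] by measurable
  qed
  have ptae: "AE x in rho. pt l x = phi l x" if l: "l < N" for l
    using phe[OF l] by eventually_elim (use pos l in \<open>auto simp: pt_def\<close>)
  define v where "v l x = sqrt (lam l) * pt l x" for l x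
  have vm[measurable]: "v l \<in> borel_measurable rho" if "l < N" for l
    using ptm[OF that] unfolding v_def[abs_def] by measurable
  have vae: "AE x in rho. v l x = sqrt (lam l) * phi l x" if l: "l < N" for l
    using ptae[OF l] by eventually_elim (simp add: v_def)
  have vv_int: "integrable rho (\<lambda>x. v l x * v l' x)" if l: "l < N" "l' < N" for l l'
  proof (rule integrable_cong_AE_imp[where g="\<lambda>x. sqrt (lam l) * sqrt (lam l') * (phi l x * phi l' x)"])
    show "integrable rho (\<lambda>x. sqrt (lam l) * sqrt (lam l') * (phi l x * phi l' x))" using phpp[OF l] by simp
    show "(\<lambda>x. v l x * v l' x) \<in> borel_measurable rho" using vm[OF l(1)] vm[OF l(2)] by measurable
    show "AE x in rho. sqrt (lam l) * sqrt (lam l') * (phi l x * phi l' x) = v l x * v l' x"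
      using vae[OF l(1)] vae[OF l(2)] by eventually_elim simp
  qed
  have vv: "(\<integral>x. v l x * v l' x \<partial>rho) = (if l = l' then lam l else 0)" if l: "l < N" "l' < N" for l l'
  proof -
    have "(\<integral>x. v l x * v l' x \<partial>rho) = (\<integral>x. sqrt (lam l) * sqrt (lam l') * (phi l x * phi l' x) \<partial>rho)"
    proof (rule Bochner_Integration.integral_cong_AE)
      show "(\<lambda>x. v l x * v l' x) \<in> borel_measurable rho" using vm[OF l(1)] vm[OF l(2)] by measurable
      show "(\<lambda>x. sqrt (lam l) * sqrt (lam l') * (phi l x * phi l' x)) \<in> borel_measurable rho"
        using phm[OF l(1)] phm[OF l(2)] by measurable
      show "AE x in rho. v l x * v l' x = sqrt (lam l) * sqrt (lam l') * (phi l x * phi l' x)"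
        using vae[OF l(1)] vae[OF l(2)] by eventually_elim simp
    qed
    also have "\<dots> = (if l = l' then lam l else 0)" using po l pos[rule_format, OF l(2)] by auto
    finally show ?thesis .
  qed
  have phv_int: "integrable rho (\<lambda>x. phi l x * v l' x)" if l: "l < N" "l' < N" for l l'
  proof (rule integrable_cong_AE_imp[where g="\<lambda>x. sqrt (lam l') * (phi l x * phi l' x)"])
    show "integrable rho (\<lambda>x. sqrt (lam l') * (phi l x * phi l' x))" using phpp[OF l] by simp
    show "(\<lambda>x. phi l x * v l' x) \<in> borel_measurable rho" using phm[OF l(1)] vm[OF l(2)] by measurable
    show "AE x in rho. sqrt (lam l') * (phi l x * phi l' x) = phi l x * v l' x"
      using vae[OF l(2)] by eventually_elim simp
  qed
  have phv: "(\<integral>x. phi l x * v l' x \<partial>rho) = (if l = l' then sqrt (lam l) else 0)" if l: "l < N" "l' < N" for l l'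
  proof -
    have "(\<integral>x. phi l x * v l' x \<partial>rho) = (\<integral>x. sqrt (lam l') * (phi l x * phi l' x) \<partial>rho)"
    proof (rule Bochner_Integration.integral_cong_AE)
      show "(\<lambda>x. phi l x * v l' x) \<in> borel_measurable rho" using phm[OF l(1)] vm[OF l(2)] by measurable
      show "(\<lambda>x. sqrt (lam l') * (phi l x * phi l' x)) \<in> borel_measurable rho"
        using phm[OF l(1)] phm[OF l(2)] by measurable
      show "AE x in rho. phi l x * v l' x = sqrt (lam l') * (phi l x * phi l' x)"
        using vae[OF l(2)] by eventually_elim simp
    qed
    also have "\<dots> = (if l = l' then sqrt (lam l) else 0)" using po l by simp
    finally show ?thesis .
  qed
  have K: "ennreal ((\<Sum>l<N. b l * v l x)\<^sup>2) \<le> S x"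
    if bn: "(\<Sum>l<N. (b l)\<^sup>2) \<le> 1" and bc: "\<forall>i<n. (\<Sum>l<N. b l * v l (xs i)) = 0" and x: "x \<in> X" for b x
  proof -
    define h where "h y = (\<Sum>l<N. (b l / sqrt (lam l)) * phi l y)" for y
    have hi: "integrable rho h" unfolding h_def using phi_i by auto
    have Th: "(\<integral>y. k z y * h y \<partial>rho) = (\<Sum>l<N. b l * v l z)" if z: "z \<in> X" for z
    proof -
      have "(\<integral>y. k z y * h y \<partial>rho) = (\<integral>y. (\<Sum>l<N. (b l / sqrt (lam l)) * (k z y * phi l y)) \<partial>rho)"
        unfolding h_def by (simp add: sum_distrib_left mult_ac)
      also have "\<dots> = (\<Sum>l<N. (b l / sqrt (lam l)) * (\<integral>y. k z y * phi l y \<partial>rho))"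
        by (subst Bochner_Integration.integral_sum) (auto intro!: kint z phi_i)
      also have "\<dots> = (\<Sum>l<N. b l * v l z)"
      proof (rule sum.cong[OF refl])
        fix l assume "l \<in> {..<N}"
        then have "lam l > 0" using pos by auto
        then show "b l / sqrt (lam l) * (\<integral>y. k z y * phi l y \<partial>rho) = b l * v l z"
          unfolding v_def pt_def by (rule sqrt_helper)
      qed
      finally show ?thesis .
    qed
    have R: "(\<integral>y. h y * (\<integral>z. k y z * h z \<partial>rho) \<partial>rho) = (\<Sum>l<N. (b l)\<^sup>2)"
    proof -
      have "(\<integral>y. h y * (\<integral>z. k y z * h z \<partial>rho) \<partial>rho) = (\<integral>y. h y * (\<Sum>l<N. b l * v l y) \<partial>rho)"
        by (rule Bochner_Integration.integral_cong[OF refl]) (simp add: Th space_rho)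
      also have "\<dots> = (\<integral>y. (\<Sum>l<N. \<Sum>l'<N. (b l / sqrt (lam l) * b l') * (phi l y * v l' y)) \<partial>rho)"
        unfolding h_def by (simp only: sum_product) (simp add: mult_ac)
      also have "\<dots> = (\<Sum>l<N. (\<integral>y. (\<Sum>l'<N. (b l / sqrt (lam l) * b l') * (phi l y * v l' y)) \<partial>rho))"
      proof (rule Bochner_Integration.integral_sum)
        fix l assume l: "l \<in> {..<N}"
        show "integrable rho (\<lambda>y. \<Sum>l'<N. (b l / sqrt (lam l) * b l') * (phi l y * v l' y))"
          by (rule Bochner_Integration.integrable_sum, rule Bochner_Integration.integrable_mult_right, rule phv_int) (use l in auto)
      qed
      also have "\<dots> = (\<Sum>l<N. \<Sum>l'<N. (b l / sqrt (lam l) * b l') * (\<integral>y. phi l y * v l' y \<partial>rho))"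
      proof (rule sum.cong[OF refl])
        fix l assume l: "l \<in> {..<N}"
        have ii: "\<And>l'. l' \<in> {..<N} \<Longrightarrow> integrable rho (\<lambda>y. (b l / sqrt (lam l) * b l') * (phi l y * v l' y))"
          by (rule Bochner_Integration.integrable_mult_right, rule phv_int) (use l in auto)
        show "(\<integral>y. (\<Sum>l'<N. (b l / sqrt (lam l) * b l') * (phi l y * v l' y)) \<partial>rho)
            = (\<Sum>l'<N. (b l / sqrt (lam l) * b l') * (\<integral>y. phi l y * v l' y \<partial>rho))"
          by (subst Bochner_Integration.integral_sum[OF ii]) simp_all
      qed
      also have "\<dots> = (\<Sum>l<N. (b l / sqrt (lam l) * b l) * sqrt (lam l))"
      proof (rule sum.cong[OF refl])
        fix l assume l: "l \<in> {..<N}"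
        have "(\<Sum>l'<N. (b l / sqrt (lam l) * b l') * (\<integral>y. phi l y * v l' y \<partial>rho))
            = (\<Sum>l'<N. if l = l' then (b l / sqrt (lam l) * b l') * sqrt (lam l) else 0)"
          using l by (intro sum.cong) (auto simp: phv)
        also have "\<dots> = (b l / sqrt (lam l) * b l) * sqrt (lam l)" using l by (simp add: sum.delta)
        finally show "(\<Sum>l'<N. (b l / sqrt (lam l) * b l') * (\<integral>y. phi l y * v l' y \<partial>rho)) = (b l / sqrt (lam l) * b l) * sqrt (lam l)" .
      qed
      also have "\<dots> = (\<Sum>l<N. (b l)\<^sup>2)"
      proof (rule sum.cong[OF refl])
        fix l assume "l \<in> {..<N}"
        then have "lam l > 0" using pos by auto
        then show "b l / sqrt (lam l) * b l * sqrt (lam l) = (b l)\<^sup>2" by (rule sqrt_helper2)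
      qed
      finally show ?thesis .
    qed
    define Tf where "Tf z = (\<integral>y. k z y * h y \<partial>rho)" for z
    have ball: "Tf \<in> rkhs_ball X k" using Tball[OF hi] R bn unfolding Tf_def by simp
    have zero: "\<forall>i<n. Tf (xs i) = 0" using Th xs bc unfolding Tf_def by simp
    have "ennreal ((Tf x)\<^sup>2) \<le> S x"
      unfolding S_def by (rule SUP_upper[where f="\<lambda>f. ennreal ((f x)\<^sup>2)"]) (use ball zero in auto)
    then show ?thesis using Th[OF x] unfolding Tf_def by simp
  qed
  define M where "M = {n..<N}"
  obtain B :: "nat \<Rightarrow> nat \<Rightarrow> real" where
    B1: "\<forall>m\<in>M. \<forall>l. l > m \<longrightarrow> B m l = 0" and
    B2: "\<forall>m\<in>M. \<forall>m'\<in>M. (\<Sum>l<N. B m l * B m' l) = (if m = m' then 1 else 0)" and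
    B3: "\<forall>m\<in>M. \<forall>i<n. (\<Sum>l<N. v l (xs i) * B m l) = 0"
    using onb[of N N n "\<lambda>i l. v l (xs i)"] unfolding M_def by auto
  have finM: "finite M" unfolding M_def by simp
  have gen: "(\<Sum>l<N. (\<Sum>m\<in>M. a m * B m l) * (\<Sum>m'\<in>M. c m' * B m' l)) = (\<Sum>m\<in>M. a m * c m)" for a c
  proof -
    have "(\<Sum>l<N. (\<Sum>m\<in>M. a m * B m l) * (\<Sum>m'\<in>M. c m' * B m' l))
        = (\<Sum>m\<in>M. a m * (\<Sum>m'\<in>M. c m' * (\<Sum>l<N. B m l * B m' l)))" by (rule quad_swap)
    also have "\<dots> = (\<Sum>m\<in>M. a m * c m)"
      by (rule sum.cong[OF refl]) (use B2 finM in \<open>simp add: ortho_collapse\<close>)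
    finally show ?thesis .
  qed
  define w where "w m x = (\<Sum>l<N. B m l * v l x)" for m x
  have W: "ennreal (\<Sum>m\<in>M. (w m x)\<^sup>2) \<le> S x" if x: "x \<in> X" for x
  proof (cases "(\<Sum>m\<in>M. (w m x)\<^sup>2) = 0")
    case True then show ?thesis by simp
  next
    case False
    define W where "W = (\<Sum>m\<in>M. (w m x)\<^sup>2)"
    have W0: "W > 0" using False sum_nonneg[of M "\<lambda>m. (w m x)\<^sup>2"] unfolding W_def by simp
    define b where "b l = (\<Sum>m\<in>M. w m x * B m l) / sqrt W" for l
    have "(\<Sum>l<N. (b l)\<^sup>2) = (\<Sum>l<N. (\<Sum>m\<in>M. w m x * B m l) * (\<Sum>m'\<in>M. w m' x * B m' l)) / W"
    proof -
      have "(b l)\<^sup>2 = (\<Sum>m\<in>M. w m x * B m l)\<^sup>2 / W" for l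
        unfolding b_def using W0 by (simp add: power_divide)
      then show ?thesis by (simp add: power2_eq_square sum_divide_distrib)
    qed
    also have "\<dots> = 1" unfolding gen using W0 by (simp add: W_def power2_eq_square)
    finally have bn: "(\<Sum>l<N. (b l)\<^sup>2) \<le> 1" by simp
    have bc: "\<forall>i<n. (\<Sum>l<N. b l * v l (xs i)) = 0"
    proof (intro allI impI)
      fix i assume i: "i < n"
      have "(\<Sum>l<N. b l * v l (xs i)) = (\<Sum>l<N. (\<Sum>m\<in>M. w m x * B m l) * v l (xs i) / sqrt W)"
        unfolding b_def by (rule sum.cong[OF refl]) (simp only: times_divide_eq_left)
      also have "\<dots> = (\<Sum>l<N. (\<Sum>m\<in>M. w m x * B m l) * v l (xs i)) / sqrt W"
        by (rule sum_divide_distrib[symmetric])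
      also have "\<dots> = (\<Sum>m\<in>M. w m x * (\<Sum>l<N. B m l * v l (xs i))) / sqrt W" by (simp only: lin_swap)
      also have "\<dots> = 0" using B3 i by (simp add: mult.commute)
      finally show "(\<Sum>l<N. b l * v l (xs i)) = 0" .
    qed
    have bx: "(\<Sum>l<N. b l * v l x) = sqrt W"
    proof -
      have "(\<Sum>l<N. b l * v l x) = (\<Sum>l<N. (\<Sum>m\<in>M. w m x * B m l) * v l x / sqrt W)"
        unfolding b_def by (rule sum.cong[OF refl]) (simp only: times_divide_eq_left)
      also have "\<dots> = (\<Sum>l<N. (\<Sum>m\<in>M. w m x * B m l) * v l x) / sqrt W"
        by (rule sum_divide_distrib[symmetric])
      also have "\<dots> = (\<Sum>m\<in>M. w m x * w m x) / sqrt W" by (simp only: lin_swap w_def)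
      also have "\<dots> = W / sqrt W" by (simp add: W_def power2_eq_square)
      also have "\<dots> = sqrt W" using W0 by (simp add: real_div_sqrt)
      finally show ?thesis .
    qed
    have "ennreal ((\<Sum>l<N. b l * v l x)\<^sup>2) \<le> S x" by (rule K[OF bn bc x])
    then show ?thesis using bx W0 unfolding W_def by simp
  qed
  have wsq_eq: "(w m x)\<^sup>2 = (\<Sum>l<N. \<Sum>l'<N. B m l * B m l' * (v l x * v l' x))" for m x
    by (simp add: w_def power2_eq_square sum_product mult_ac)
  have wsq_int: "integrable rho (\<lambda>x. (w m x)\<^sup>2)" for m
    unfolding wsq_eq by (intro Bochner_Integration.integrable_sum Bochner_Integration.integrable_mult_right vv_int) auto
  have wsq: "(\<integral>x. (w m x)\<^sup>2 \<partial>rho) = (\<Sum>l<N. (B m l)\<^sup>2 * lam l)" for m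
  proof -
    have "(\<integral>x. (w m x)\<^sup>2 \<partial>rho) = (\<Sum>l<N. \<Sum>l'<N. B m l * B m l' * (\<integral>x. v l x * v l' x \<partial>rho))"
    proof -
      have i1: "\<And>l l'. l \<in> {..<N} \<Longrightarrow> l' \<in> {..<N} \<Longrightarrow> integrable rho (\<lambda>x. B m l * B m l' * (v l x * v l' x))"
        by (rule Bochner_Integration.integrable_mult_right, rule vv_int) auto
      have i2: "\<And>l. l \<in> {..<N} \<Longrightarrow> integrable rho (\<lambda>x. \<Sum>l'<N. B m l * B m l' * (v l x * v l' x))"
        by (rule Bochner_Integration.integrable_sum, rule i1) auto
      have "(\<integral>x. (w m x)\<^sup>2 \<partial>rho) = (\<Sum>l<N. (\<integral>x. (\<Sum>l'<N. B m l * B m l' * (v l x * v l' x)) \<partial>rho))"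
        unfolding wsq_eq by (rule Bochner_Integration.integral_sum[OF i2])
      also have "\<dots> = (\<Sum>l<N. \<Sum>l'<N. B m l * B m l' * (\<integral>x. v l x * v l' x \<partial>rho))"
      proof (rule sum.cong[OF refl])
        fix l assume l: "l \<in> {..<N}"
        show "(\<integral>x. (\<Sum>l'<N. B m l * B m l' * (v l x * v l' x)) \<partial>rho) = (\<Sum>l'<N. B m l * B m l' * (\<integral>x. v l x * v l' x \<partial>rho))"
          by (subst Bochner_Integration.integral_sum[OF i1[OF l]]) simp_all
      qed
      finally show ?thesis .
    qed
    also have "\<dots> = (\<Sum>l<N. \<Sum>l'<N. if l = l' then B m l * B m l' * lam l else 0)"
      by (intro sum.cong refl) (auto simp: vv)
    also have "\<dots> = (\<Sum>l<N. (B m l)\<^sup>2 * lam l)" by (simp add: sum.delta power2_eq_square)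
    finally show ?thesis .
  qed
  have wge: "lam m \<le> (\<Sum>l<N. (B m l)\<^sup>2 * lam l)" if m: "m \<in> M" for m
  proof -
    have "(\<Sum>l<N. (B m l)\<^sup>2) = 1" using B2 m by (simp add: power2_eq_square)
    then have "lam m = (\<Sum>l<N. (B m l)\<^sup>2 * lam m)" by (simp add: sum_distrib_right[symmetric])
    also have "\<dots> \<le> (\<Sum>l<N. (B m l)\<^sup>2 * lam l)"
    proof (rule sum_mono)
      fix l assume l: "l \<in> {..<N}"
      show "(B m l)\<^sup>2 * lam m \<le> (B m l)\<^sup>2 * lam l"
      proof (cases "l > m")
        case True then show ?thesis using B1 m by simp
      next
        case False
        then have "lam m \<le> lam l" using anti unfolding antimono_def by simp
        then show ?thesis by (simp add: mult_left_mono)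
      qed
    qed
    finally show ?thesis .
  qed
  have Wint: "integrable rho (\<lambda>x. \<Sum>m\<in>M. (w m x)\<^sup>2)" using wsq_int by auto
  have "ennreal (\<Sum>m\<in>M. lam m) \<le> ennreal (\<integral>x. (\<Sum>m\<in>M. (w m x)\<^sup>2) \<partial>rho)"
  proof (rule ennreal_leI)
    have "(\<integral>x. (\<Sum>m\<in>M. (w m x)\<^sup>2) \<partial>rho) = (\<Sum>m\<in>M. (\<integral>x. (w m x)\<^sup>2 \<partial>rho))"
      by (rule Bochner_Integration.integral_sum) (use wsq_int in auto)
    then show "(\<Sum>m\<in>M. lam m) \<le> (\<integral>x. (\<Sum>m\<in>M. (w m x)\<^sup>2) \<partial>rho)"
      using sum_mono[of M lam "\<lambda>m. \<integral>x. (w m x)\<^sup>2 \<partial>rho"] wge wsq by simp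
  qed
  also have "\<dots> = (\<integral>\<^sup>+ x. ennreal (\<Sum>m\<in>M. (w m x)\<^sup>2) \<partial>rho)"
    by (rule nn_integral_eq_integral[symmetric]) (use Wint in \<open>auto intro!: sum_nonneg\<close>)
  also have "\<dots> \<le> (\<integral>\<^sup>+ x. S x \<partial>rho)"
    by (rule nn_integral_mono) (use W space_rho in auto)
  finally show ?thesis unfolding S_def M_def .
qed

end


theorem mainTheorem8:
  fixes X :: "'a::euclidean_space set" and k :: "'a \<Rightarrow> 'a \<Rightarrow> real"
    and rho :: "'a measure" and lam :: "nat \<Rightarrow> real"
    and n :: nat and xs :: "nat \<Rightarrow> 'a"
  assumes "compact X"
    and "pd_kernel X k"
    and "prob_space rho"
    and "sets rho = sets (restrict_space borel X)"
    and "kernel_eigenvalues k rho lam"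
    and "n \<ge> 1"
    and "\<forall>i<n. xs i \<in> X"
  shows "(\<integral>\<^sup>+ x. (SUP f\<in>{f \<in> rkhs_ball X k. \<forall>i<n. f (xs i) = 0}. ennreal ((f x)\<^sup>2)) \<partial>rho)
           \<ge> (\<Sum>l. ennreal (lam (l + n)))"
proof -
  interpret kset X k rho by (rule kset.intro) (fact assms(1), fact assms(2), fact assms(3), fact assms(4))
  have ke: "kernel_eigenvalues k rho lam" by (fact assms(5))
  have anti: "antimono lam" and nonneg: "\<And>l. 0 \<le> lam l" using ke unfolding kernel_eigenvalues_def by auto
  define I where "I = (\<integral>\<^sup>+ x. (SUP f\<in>{f \<in> rkhs_ball X k. \<forall>i<n. f (xs i) = 0}. ennreal ((f x)\<^sup>2)) \<partial>rho)"
  have part: "(\<Sum>l<L. ennreal (lam (l + n))) \<le> I" for L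
  proof -
    obtain N where N: "N \<le> n + L" "\<forall>l<N. lam l > 0" "\<forall>m. N \<le> m \<longrightarrow> lam m = 0 \<or> n + L \<le> m"
    proof (cases "\<forall>l<n + L. lam l > 0")
      case True
      then show ?thesis using that[of "n + L"] by auto
    next
      case False
      then obtain l0 where l0: "l0 < n + L" "\<not> lam l0 > 0" by auto
      define N where "N = (LEAST l. \<not> lam l > 0)"
      have NN: "\<not> lam N > 0" unfolding N_def by (rule LeastI[of _ l0]) (use l0 in auto)
      have Nle: "N \<le> l0" unfolding N_def by (rule Least_le) (use l0 in auto)
      have "\<forall>l<N. lam l > 0" unfolding N_def using not_less_Least by blast
      moreover have "\<forall>m. N \<le> m \<longrightarrow> lam m = 0 \<or> n + L \<le> m"
      proof (intro allI impI)
        fix m assume "N \<le> m"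
        then have "lam m \<le> lam N" using anti unfolding antimono_def by auto
        then show "lam m = 0 \<or> n + L \<le> m" using NN nonneg[of m] by auto
      qed
      ultimately show ?thesis using that[of N] Nle l0 by auto
    qed
    have "(\<Sum>l<L. ennreal (lam (l + n))) = ennreal (\<Sum>l<L. lam (l + n))"
      using nonneg by simp
    also have "(\<Sum>l<L. lam (l + n)) = (\<Sum>m\<in>{n..<n + L}. lam m)"
    proof -
      have "(\<Sum>m\<in>{0 + n..<L + n}. lam m) = (\<Sum>l\<in>{0..<L}. lam (l + n))" by (rule sum.shift_bounds_nat_ivl)
      then show ?thesis by (simp add: atLeast0LessThan add.commute)
    qed
    also have "\<dots> = (\<Sum>m\<in>{n..<N}. lam m)"
    proof (rule sum.mono_neutral_right)
      show "\<forall>i\<in>{n..<n + L} - {n..<N}. lam i = 0"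
      proof
        fix i assume "i \<in> {n..<n + L} - {n..<N}"
        then have "N \<le> i" "i < n + L" by auto
        then show "lam i = 0" using N(3) by force
      qed
    qed (use N in auto)
    also have "ennreal \<dots> \<le> I" unfolding I_def by (rule core[OF ke N(2) assms(7)])
    finally show ?thesis .
  qed
  have "(\<Sum>l. ennreal (lam (l + n))) \<le> I"
    unfolding suminf_eq_SUP by (rule SUP_least) (rule part)
  then show ?thesis unfolding I_def by simp
qed


end
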